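(* Let $n,k,s$ be positive integers with $2\le s\le\lfloor n/k\rfloor$, write $n=ds+s_0$ with $d=\lfloor n/s\rfloor$ and $s_0\le\min\{s,d\}$, and let $\gamma_{cc}(n,k,s)$ be the repair bandwidth of the Cubic Code for the Fixed Cluster Repair System with these parameters storing a file of size $M$. Then $$\gamma_{cc}(n,k,s)\le\frac{M/d}{1-\left(1-\frac{k}{(s+1)d}\right)^{s+1}}.$$
   Context: FCRS: $n=ds+s_0$ servers in clusters $1,\dots,s$ of size $d$ and a cluster $s+1$ of size $s_0$; any $k$ servers recover the file; a failed server in cluster $r$ is repaired from all $d$ servers of some cluster $i\in[s]$, $i\neq r$. Cubic Code: the file is split into $m$ chunks of size $M/m$ and encoded with a $(d^{s+1},m)$ MDS code with symbols $C_b$ indexed by $b=b_{s+1}\cdots b_1$, $b_i\in[d]$; server $(i,j)$ stores $\{C_b:b_i=j\}$ and, to repair $(r,\ell)$ from cluster $i$, sends $\{C_b:b_i=j,b_r=\ell\}$; here $m=\min\{d^{s+1}-\prod_{i=1}^{s+1}(d-k_i):k_i\in\mathbb Z_{\ge0},\ \sum_i k_i=k,\ k_{s+1}\le s_0\}$, and $\gamma_{cc}(n,k,s)=Md^s/m$. *)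

theory Defs
  imports Complex_Main
begin

text \<open>Fixed Cluster Repair System parameters: clusters 1..s of size d and cluster s+1 of
size s0.\<close>

definition cubic_m :: "nat \<Rightarrow> nat \<Rightarrow> nat \<Rightarrow> nat \<Rightarrow> int" where
  "cubic_m d s s0 k = Min { int d ^ (s+1) - (\<Prod>i\<in>{1..s+1}. (int d - int (kv i))) | kv.
       (\<forall>i. i \<notin> {1..s+1} \<longrightarrow> kv i = 0) \<and> (\<Sum>i\<in>{1..s+1}. kv i) = k \<and> kv (s+1) \<le> s0 }"

definition gamma_cc :: "real \<Rightarrow> nat \<Rightarrow> nat \<Rightarrow> nat \<Rightarrow> real" where
  "gamma_cc M n k s = (let d = n div s; s0 = n - d * s in
      M * real d ^ s / real_of_int (cubic_m d s s0 k))"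

end

theory Submission
  imports Defs "HOL-Analysis.Analysis"
begin

lemma amgm_prod:
  fixes kv :: "nat \<Rightarrow> nat" and d k s :: nat
  assumes sum: "(\<Sum>i\<in>{1..s+1}. kv i) = k" and kd: "k \<le> d"
  shows "(\<Prod>i\<in>{1..s+1}. (real d - real (kv i))) \<le> (real d - real k / real (s+1)) ^ (s+1)"
proof -
  let ?S = "{1..s+1::nat}"
  let ?x = "\<lambda>i. real d - real (kv i)"
  have le: "kv i \<le> k" if "i \<in> ?S" for i
    using sum that by (metis finite_atLeastAtMost member_le_sum zero_le)
  have x0: "\<And>i. i \<in> ?S \<Longrightarrow> ?x i \<ge> 0" using le kd by force
  have card: "card ?S = s+1" by simp
  have am: "(\<Sum>i\<in>?S. ?x i / card ?S) \<ge> (\<Prod>i\<in>?S. ?x i) powr (1 / card ?S)"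
    by (rule arith_geom_mean) (use x0 in auto)
  have "(\<Sum>i\<in>?S. ?x i / card ?S) = (\<Sum>i\<in>?S. ?x i) / (s+1)"
    by (simp add: sum_divide_distrib[symmetric])
  also have "(\<Sum>i\<in>?S. ?x i) = real (s+1) * d - real k"
    using sum by (simp add: sum_subtractf flip: of_nat_sum)
  finally have A: "(\<Sum>i\<in>?S. ?x i / card ?S) = real d - real k / real (s+1)"
    by (simp add: field_simps)
  define P where "P = (\<Prod>i\<in>?S. ?x i)"
  have P0: "P \<ge> 0" unfolding P_def by (rule prod_nonneg) (use x0 in blast)
  have "P powr (1 / real (s+1)) \<le> real d - real k / real (s+1)"
    using am A card unfolding P_def by simp
  hence "(P powr (1 / real (s+1))) ^ (s+1) \<le> (real d - real k / real (s+1)) ^ (s+1)"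
    by (rule power_mono) simp
  moreover have "(P powr (1 / real (s+1))) ^ (s+1) = P"
  proof (cases "P = 0")
    case False
    then have "P > 0" using P0 by simp
    then show ?thesis
    proof -
      have "(P powr (1 / real (s+1))) ^ (s+1) = (P powr (1 / real (s+1))) powr real (s+1)"
        by (rule powr_realpow[symmetric]) (use \<open>P > 0\<close> in simp)
      also have "\<dots> = P powr (1 / real (s+1) * real (s+1))" by (simp add: powr_powr)
      also have "\<dots> = P" using \<open>P > 0\<close> by simp
      finally show ?thesis .
    qed
  qed simp
  ultimately show ?thesis unfolding P_def by simp
qed

theorem corollary1:
  fixes n k s :: nat and M :: real
  assumes "0 < n" and "0 < k" and "0 < s"
    and "2 \<le> s" and "s \<le> n div k"
    and "n - (n div s) * s \<le> min s (n div s)"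
    and "0 < M"
  shows "gamma_cc M n k s \<le>
    (M / real (n div s)) / (1 - (1 - real k / (real (s+1) * real (n div s))) ^ (s+1))"
proof -
  define d where "d = n div s"
  define s0 where "s0 = n - d * s"
  have "s * k \<le> n" using assms(5) assms(2) by (simp add: less_eq_div_iff_mult_less_eq)
  hence kd: "k \<le> d" unfolding d_def using assms(3) by (simp add: less_eq_div_iff_mult_less_eq mult.commute)
  have d0: "d > 0" using kd assms(2) by simp
  define val where "val = (\<lambda>kv::nat\<Rightarrow>nat. int d ^ (s+1) - (\<Prod>i\<in>{1..s+1}. (int d - int (kv i))))"
  define Adm where "Adm = {kv::nat\<Rightarrow>nat. (\<forall>i. i \<notin> {1..s+1} \<longrightarrow> kv i = 0) \<and> (\<Sum>i\<in>{1..s+1}. kv i) = k \<and> kv (s+1) \<le> s0}"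
  have Seq: "{ int d ^ (s+1) - (\<Prod>i\<in>{1..s+1}. (int d - int (kv i))) | kv.
       (\<forall>i. i \<notin> {1..s+1} \<longrightarrow> kv i = 0) \<and> (\<Sum>i\<in>{1..s+1}. kv i) = k \<and> kv (s+1) \<le> s0 } = val ` Adm"
    unfolding val_def Adm_def by auto
  have bnd: "kv i \<le> d" if "kv \<in> Adm" "i \<in> {1..s+1}" for kv i
  proof -
    have "kv i \<le> (\<Sum>i\<in>{1..s+1}. kv i)" using that(2) by (intro member_le_sum) auto
    thus ?thesis using that(1) kd unfolding Adm_def by simp
  qed
  have sub: "val ` Adm \<subseteq> {0..int d ^ (s+1)}"
  proof
    fix v assume "v \<in> val ` Adm"
    then obtain kv where kv: "kv \<in> Adm" "v = val kv" by auto
    have "(\<Prod>i\<in>{1..s+1}. (int d - int (kv i))) \<le> (\<Prod>i\<in>{1..s+1::nat}. int d)"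
      by (rule prod_mono) (use bnd[OF kv(1)] in auto)
    moreover have "(\<Prod>i\<in>{1..s+1}. (int d - int (kv i))) \<ge> 0"
      by (rule prod_nonneg) (use bnd[OF kv(1)] in auto)
    ultimately show "v \<in> {0..int d ^ (s+1)}" using kv(2) unfolding val_def by simp
  qed
  have fin: "finite (val ` Adm)" using sub finite_subset by blast
  have "(\<lambda>i. if i = 1 then k else 0) \<in> Adm" unfolding Adm_def using assms(3) by simp
  hence ne: "val ` Adm \<noteq> {}" by auto
  have m_eq: "cubic_m d s s0 k = Min (val ` Adm)" unfolding cubic_m_def Seq ..
  obtain kv where kv: "kv \<in> Adm" "cubic_m d s s0 k = val kv"
    using Min_in[OF fin ne] m_eq by auto
  define x where "x = real k / (real (s+1) * real d)"
  have "k \<le> (s+1) * d" using kd by (simp add: trans_le_add1)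
  hence kd': "real k \<le> real (s+1) * real d" by (metis of_nat_le_iff of_nat_mult)
  have x01: "0 < x" "x \<le> 1" unfolding x_def using d0 kd' assms(2)
    by (auto simp: divide_le_eq_1 simp del: of_nat_Suc)
  have "(1 - x) ^ (s+1) < 1"
    using x01 by (intro power_less_one_iff[THEN iffD2]) auto
  hence den: "0 < 1 - (1 - x) ^ (s+1)" by simp
  have sumk: "(\<Sum>i\<in>{1..s+1}. kv i) = k" using kv(1) unfolding Adm_def by simp
  have "(\<Prod>i\<in>{1..s+1}. (real d - real (kv i))) \<le> (real d - real k / real (s+1)) ^ (s+1)"
    by (rule amgm_prod[OF sumk kd])
  also have "real d - real k / real (s+1) = real d * (1 - x)"
  proof -
    have "real d > 0" "real (s+1) > 0" using d0 by auto
    thus ?thesis unfolding x_def by (simp add: field_simps del: of_nat_Suc)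
  qed
  finally have pr: "(\<Prod>i\<in>{1..s+1}. (real d - real (kv i))) \<le> real d ^ (s+1) * (1-x)^(s+1)"
    by (simp only: power_mult_distrib)
  have mreal: "real_of_int (cubic_m d s s0 k) = real d ^ (s+1) - (\<Prod>i\<in>{1..s+1}. (real d - real (kv i)))"
    unfolding kv(2) val_def by simp
  have mge: "real d ^ (s+1) * (1 - (1-x)^(s+1)) \<le> real_of_int (cubic_m d s s0 k)"
    using mreal pr by (simp add: algebra_simps)
  have pos: "0 < real d ^ (s+1) * (1 - (1-x)^(s+1))" using d0 den by simp
  have "gamma_cc M n k s = M * real d ^ s / real_of_int (cubic_m d s s0 k)"
    unfolding gamma_cc_def d_def s0_def Let_def ..
  also have "\<dots> \<le> M * real d ^ s / (real d ^ (s+1) * (1 - (1-x)^(s+1)))"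
  proof (rule divide_left_mono[OF mge])
    show "0 \<le> M * real d ^ s" using assms(7) by simp
    have "0 < real_of_int (cubic_m d s s0 k)" using mge pos by linarith
    thus "0 < real_of_int (cubic_m d s s0 k) * (real d ^ (s+1) * (1 - (1-x)^(s+1)))"
      using pos by (rule mult_pos_pos)
  qed
  also have "\<dots> = (M / real d) / (1 - (1-x)^(s+1))"
  proof -
    define D where "D = 1 - (1-x)^(s+1)"
    have "real d ^ s > 0" using d0 by simp
    hence "M * real d ^ s / (real d ^ (s+1) * D) = M / (real d * D)"
      by (simp add: power_Suc mult.assoc)
    thus ?thesis unfolding D_def by simp
  qed
  finally show ?thesis unfolding x_def d_def .
qed

end
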